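(* Let $f:\mathbb{R}^n\times\mathbb{R}^m\to\mathbb{R}$ be twice continuously differentiable, $\mu$-strongly convex in $x$ for every fixed $y$ and $\mu$-strongly concave in $y$ for every fixed $x$ ($\mu>0$). Write $z=(x;y)$, $F(z)=(\nabla_x f(x,y);-\nabla_y f(x,y))$, and assume the largest singular value of $\nabla F(z)$ is at most $L$ for all $z$. Let $m(z)=\frac12\|F(z)\|^2$. Then for every $z=(x;y)$, $$\frac{\mu}{L^2}m(z)\le \max_{y'\in\mathbb{R}^m}f(x,y')-\min_{x'\in\mathbb{R}^n}f(x',y)\le \frac{L}{\mu^2}m(z).$$
   Context: $\|\cdot\|$ is the Euclidean norm for vectors and the largest singular value for matrices. *)

theory Defs
  imports "HOL-Analysis.Analysis"
begin

definition strongly_convex_on :: "'a::real_inner set \<Rightarrow> real \<Rightarrow> ('a \<Rightarrow> real) \<Rightarrow> bool" where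
  "strongly_convex_on S \<mu> g \<longleftrightarrow> convex_on S (\<lambda>x. g x - \<mu> / 2 * (norm x)\<^sup>2)"

definition C2 :: "('a::real_normed_vector \<Rightarrow> real) \<Rightarrow> bool" where
  "C2 g \<longleftrightarrow> (\<exists>Dg D2g. (\<forall>p. (g has_derivative blinfun_apply (Dg p)) (at p)) \<and>
                      (\<forall>p. (Dg has_derivative blinfun_apply (D2g p)) (at p)) \<and>
                      continuous_on UNIV D2g)"

definition grad :: "('a::real_inner \<Rightarrow> real) \<Rightarrow> 'a \<Rightarrow> 'a" where
  "grad g p = (THE v. (g has_derivative (\<lambda>h. v \<bullet> h)) (at p))"

definition saddle_op :: "('a::real_inner \<Rightarrow> 'b::real_inner \<Rightarrow> real) \<Rightarrow> 'a \<times> 'b \<Rightarrow> 'a \<times> 'b" where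
  "saddle_op f z = (grad (\<lambda>x'. f x' (snd z)) (fst z), - grad (\<lambda>y'. f (fst z) y') (snd z))"

end

theory Submission
  imports Defs
begin

lemma sc_lower:
  fixes g :: "'a::real_inner \<Rightarrow> real"
  assumes sc: "strongly_convex_on UNIV \<mu> g"
    and d: "\<And>z. (g has_derivative (\<lambda>h. G z \<bullet> h)) (at z)"
  shows "g x' \<ge> g x + G x \<bullet> (x' - x) + \<mu>/2 * (norm (x' - x))\<^sup>2"
proof -
  define h where "h = (\<lambda>z. g z - \<mu> / 2 * (norm z)\<^sup>2)"
  define dd where "dd = x' - x"
  define \<psi> where "\<psi> = (\<lambda>t::real. h (x + t *\<^sub>R dd))"
  have ch: "convex_on UNIV h" using sc unfolding strongly_convex_on_def h_def .
  have cpsi: "convex_on UNIV \<psi>"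
  proof (rule convex_onI)
    fix t a b :: real assume t: "t > 0" "t < 1"
    have "x + ((1 - t) *\<^sub>R a + t *\<^sub>R b) *\<^sub>R dd = (1 - t) *\<^sub>R (x + a *\<^sub>R dd) + t *\<^sub>R (x + b *\<^sub>R dd)"
      by (simp add: algebra_simps)
    then show "\<psi> ((1 - t) *\<^sub>R a + t *\<^sub>R b) \<le> (1 - t) * \<psi> a + t * \<psi> b"
      unfolding \<psi>_def using convex_onD[OF ch, of t "x + a *\<^sub>R dd" "x + b *\<^sub>R dd"] t by simp
  qed simp
  have hd: "(h has_derivative (\<lambda>k. G z \<bullet> k - \<mu> / 2 * (k \<bullet> z + z \<bullet> k))) (at z)" for z
  proof -
    have i: "((\<lambda>z. z \<bullet> z) has_derivative (\<lambda>k. z \<bullet> k + k \<bullet> z)) (at z)"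
      using has_derivative_inner[OF has_derivative_ident has_derivative_ident, of z UNIV] by simp
    have "((\<lambda>z. g z - \<mu> / 2 * (z \<bullet> z)) has_derivative (\<lambda>k. G z \<bullet> k - \<mu> / 2 * (z \<bullet> k + k \<bullet> z))) (at z)"
      by (intro has_derivative_diff d has_derivative_mult_right i)
    then show ?thesis unfolding h_def power2_norm_eq_inner by (simp add: add.commute)
  qed
  have "(\<psi> has_derivative (\<lambda>s. G x \<bullet> (s *\<^sub>R dd) - \<mu> / 2 * ((s *\<^sub>R dd) \<bullet> x + x \<bullet> (s *\<^sub>R dd)))) (at 0)"
  proof -
    have l: "((\<lambda>t::real. x + t *\<^sub>R dd) has_derivative (\<lambda>s. s *\<^sub>R dd)) (at 0)"
      by (auto intro!: derivative_eq_intros)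
    have hx: "(h has_derivative (\<lambda>k. G x \<bullet> k - \<mu> / 2 * (k \<bullet> x + x \<bullet> k))) (at (x + 0 *\<^sub>R dd))"
      using hd[of x] by simp
    show ?thesis unfolding \<psi>_def
      using has_derivative_compose[OF l hx] by (simp add: algebra_simps)
  qed
  then have "(\<psi> has_field_derivative (G x \<bullet> dd - \<mu> * (x \<bullet> dd))) (at 0)"
    unfolding has_field_derivative_def
    by (rule has_derivative_eq_rhs) (auto simp: algebra_simps inner_commute fun_eq_iff)
  then have "\<psi> 1 - \<psi> 0 \<ge> (G x \<bullet> dd - \<mu> * (x \<bullet> dd)) * (1 - 0)"
    by (intro convex_on_imp_above_tangent[OF cpsi]) (auto intro: has_field_derivative_at_within)
  then have "h x' - h x \<ge> G x \<bullet> dd - \<mu> * (x \<bullet> dd)"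
    by (simp add: \<psi>_def dd_def)
  moreover have "(norm x')\<^sup>2 = (norm x)\<^sup>2 + 2 * (x \<bullet> dd) + (norm dd)\<^sup>2"
    unfolding dd_def power2_norm_eq_inner by (simp add: algebra_simps inner_commute)
  ultimately show ?thesis unfolding h_def dd_def[symmetric] by (simp add: algebra_simps)
qed

lemma descent:
  fixes g :: "'a::real_inner \<Rightarrow> real"
  assumes d: "\<And>z. (g has_derivative (\<lambda>h. G z \<bullet> h)) (at z)"
    and lip: "\<And>a b. norm (G a - G b) \<le> L * norm (a - b)"
  shows "g (x + dd) \<le> g x + G x \<bullet> dd + L/2 * (norm dd)\<^sup>2"
proof -
  define \<phi> where "\<phi> = (\<lambda>t::real. g (x + t *\<^sub>R dd) - t * (G x \<bullet> dd) - L/2 * t\<^sup>2 * (norm dd)\<^sup>2)"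
  have "\<phi> 1 \<le> \<phi> 0"
  proof (rule DERIV_nonpos_imp_nonincreasing[of 0 1 \<phi>])
    fix t :: real assume t: "0 \<le> t" "t \<le> 1"
    have l: "((\<lambda>t::real. x + t *\<^sub>R dd) has_derivative (\<lambda>s. s *\<^sub>R dd)) (at t)"
      by (auto intro!: derivative_eq_intros)
    have c: "((\<lambda>t. g (x + t *\<^sub>R dd)) has_derivative (\<lambda>s. G (x + t *\<^sub>R dd) \<bullet> (s *\<^sub>R dd))) (at t)"
      using has_derivative_compose[OF l d] by simp
    have c': "DERIV (\<lambda>t. g (x + t *\<^sub>R dd)) t :> G (x + t *\<^sub>R dd) \<bullet> dd"
      unfolding has_field_derivative_def
      by (rule has_derivative_eq_rhs[OF c]) (auto simp: fun_eq_iff algebra_simps)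
    have D: "DERIV \<phi> t :> (G (x + t *\<^sub>R dd) \<bullet> dd - G x \<bullet> dd - L * t * (norm dd)\<^sup>2)"
      unfolding \<phi>_def
      by (auto intro!: derivative_eq_intros c' simp: algebra_simps)
    have "G (x + t *\<^sub>R dd) \<bullet> dd - G x \<bullet> dd = (G (x + t *\<^sub>R dd) - G x) \<bullet> dd"
      by (simp add: inner_diff_left)
    also have "\<dots> \<le> norm (G (x + t *\<^sub>R dd) - G x) * norm dd"
      by (rule norm_cauchy_schwarz)
    also have "\<dots> \<le> L * norm (t *\<^sub>R dd) * norm dd"
      using lip[of "x + t *\<^sub>R dd" x] by (simp add: mult_right_mono)
    also have "\<dots> = L * t * (norm dd)\<^sup>2" using t by (simp add: power2_eq_square)
    finally show "\<exists>y. DERIV \<phi> t :> y \<and> y \<le> 0" using D by auto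
  qed simp
  then show ?thesis unfolding \<phi>_def by simp
qed

lemma gap_bounds:
  fixes g :: "'a::real_inner \<Rightarrow> real"
  assumes sc: "strongly_convex_on UNIV \<mu> g"
    and d: "\<And>z. (g has_derivative (\<lambda>h. G z \<bullet> h)) (at z)"
    and lip: "\<And>a b. norm (G a - G b) \<le> L * norm (a - b)"
    and mu: "\<mu> > 0" and v: "(v::'a) \<noteq> 0"
  shows "\<mu> \<le> L" "bdd_below (range g)"
    "g x - (INF z. g z) \<le> (norm (G x))\<^sup>2 / (2 * \<mu>)"
    "(norm (G x))\<^sup>2 / (2 * L) \<le> g x - (INF z. g z)"
proof -
  have "g 0 + G 0 \<bullet> (v - 0) + \<mu>/2 * (norm (v - 0))\<^sup>2 \<le> g v"
    by (rule sc_lower[OF sc d])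
  moreover have "g (0 + v) \<le> g 0 + G 0 \<bullet> v + L/2 * (norm v)\<^sup>2"
    by (rule descent[OF d lip])
  ultimately have "\<mu> * (norm v)\<^sup>2 \<le> L * (norm v)\<^sup>2" by simp
  moreover have "(norm v)\<^sup>2 > 0" using v by simp
  ultimately show muL: "\<mu> \<le> L" by simp
  have low: "g x - (norm (G x))\<^sup>2 / (2 * \<mu>) \<le> g z" for z
  proof -
    have s: "g x + G x \<bullet> (z - x) + \<mu>/2 * (norm (z - x))\<^sup>2 \<le> g z"
      by (rule sc_lower[OF sc d])
    have cs: "- (G x \<bullet> (z - x)) \<le> norm (G x) * norm (z - x)"
      using norm_cauchy_schwarz[of "- G x" "z - x"] by simp
    have "0 \<le> (\<mu> * norm (z - x) - norm (G x))\<^sup>2 / (2 * \<mu>)" using mu by simp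
    also have "\<dots> = \<mu>/2 * (norm (z - x))\<^sup>2 - norm (G x) * norm (z - x) + (norm (G x))\<^sup>2 / (2 * \<mu>)"
      using mu by (simp add: field_simps power2_eq_square)
    finally show ?thesis using s cs by linarith
  qed
  show bb: "bdd_below (range g)"
    using low by (auto intro!: bdd_belowI)
  show "g x - (INF z. g z) \<le> (norm (G x))\<^sup>2 / (2 * \<mu>)"
    using low cINF_greatest[of UNIV "g x - (norm (G x))\<^sup>2 / (2 * \<mu>)" g] by auto
  have Lp: "L > 0" using muL mu by simp
  have "(INF z. g z) \<le> g (x + (- (1/L) *\<^sub>R G x))"
    using bb by (rule cINF_lower) simp
  also have "\<dots> \<le> g x + G x \<bullet> (- (1/L) *\<^sub>R G x) + L/2 * (norm (- (1/L) *\<^sub>R G x))\<^sup>2"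
    by (rule descent[OF d lip])
  also have "\<dots> = g x - (norm (G x))\<^sup>2 / (2 * L)"
    using Lp by (simp add: power2_norm_eq_inner[symmetric] power_mult_distrib field_simps power2_eq_square)
  finally show "(norm (G x))\<^sup>2 / (2 * L) \<le> g x - (INF z. g z)" by simp
qed

lemma ex_nonzero: "\<exists>v::'a::euclidean_space. v \<noteq> 0"
  using nonempty_Basis nonzero_Basis by blast

lemma linear_repr:
  fixes l :: "'a::euclidean_space \<Rightarrow> real"
  assumes "bounded_linear l"
  shows "l h = (\<Sum>b\<in>Basis. l b *\<^sub>R b) \<bullet> h"
proof -
  interpret bounded_linear l by fact
  have "l h = l (\<Sum>b\<in>Basis. (h \<bullet> b) *\<^sub>R b)" by (simp add: euclidean_representation)
  also have "\<dots> = (\<Sum>b\<in>Basis. (h \<bullet> b) * l b)" by (simp add: sum scale)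
  also have "\<dots> = (\<Sum>b\<in>Basis. l b *\<^sub>R b) \<bullet> h"
    by (simp add: inner_sum_left inner_sum_right inner_commute mult.commute)
  finally show ?thesis .
qed

lemma grad_eq:
  fixes g :: "'a::real_inner \<Rightarrow> real"
  assumes "(g has_derivative (\<lambda>h. v \<bullet> h)) (at p)"
  shows "grad g p = v"
  unfolding grad_def
proof (rule the_equality)
  show "(g has_derivative (\<lambda>h. v \<bullet> h)) (at p)" by (rule assms)
  fix w assume "(g has_derivative (\<lambda>h. w \<bullet> h)) (at p)"
  then have "(\<lambda>h. w \<bullet> h) = (\<lambda>h. v \<bullet> h)" using assms by (rule has_derivative_unique)
  then have "w \<bullet> (w - v) = v \<bullet> (w - v)" by meson
  then have "(w - v) \<bullet> (w - v) = 0" by (simp add: inner_diff_left)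
  then show "w = v" by simp
qed

theorem proposition2p5:
  fixes f :: "real^'n \<Rightarrow> real^'m \<Rightarrow> real" and \<mu> L :: real
  assumes C2f: "C2 (\<lambda>z. f (fst z) (snd z))"
    and mu_pos: "\<mu> > 0"
    and sconvex: "\<And>y. strongly_convex_on UNIV \<mu> (\<lambda>x. f x y)"
    and sconcave: "\<And>x. strongly_convex_on UNIV \<mu> (\<lambda>y. - f x y)"
    and Lbound: "\<And>z. onorm (frechet_derivative (saddle_op f) (at z)) \<le> L"
  shows "\<mu> / L\<^sup>2 * ((1/2) * (norm (saddle_op f (x, y)))\<^sup>2)
           \<le> (SUP y'. f x y') - (INF x'. f x' y)
       \<and> (SUP y'. f x y') - (INF x'. f x' y)
           \<le> L / \<mu>\<^sup>2 * ((1/2) * (norm (saddle_op f (x, y)))\<^sup>2)"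
proof -
  obtain Dg D2g where D1: "\<And>p. ((\<lambda>z. f (fst z) (snd z)) has_derivative blinfun_apply (Dg p)) (at p)"
    and D2: "\<And>p. (Dg has_derivative blinfun_apply (D2g p)) (at p)"
    using C2f unfolding C2_def by blast
  define gx where "gx p = (\<Sum>b\<in>Basis. blinfun_apply (Dg p) (b, 0) *\<^sub>R b)" for p
  define gy where "gy p = (\<Sum>b\<in>Basis. blinfun_apply (Dg p) (0, b) *\<^sub>R b)" for p
  have px: "((\<lambda>x'. f x' b) has_derivative (\<lambda>h. gx (a, b) \<bullet> h)) (at a)" for a b
  proof -
    have l: "((\<lambda>x'. (x', b)) has_derivative (\<lambda>h. (h, 0))) (at a)"
      by (auto intro!: derivative_eq_intros)
    have "((\<lambda>x'. f x' b) has_derivative (\<lambda>h. blinfun_apply (Dg (a, b)) (h, 0))) (at a)"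
      using has_derivative_compose[OF l D1[of "(a, b)"]] by simp
    moreover have "blinfun_apply (Dg (a, b)) (h, 0) = gx (a, b) \<bullet> h" for h
      unfolding gx_def
      by (rule linear_repr[of "\<lambda>h. blinfun_apply (Dg (a, b)) (h, 0)", simplified])
        (intro bounded_linear_blinfun_apply bounded_linear_Pair bounded_linear_ident bounded_linear_zero)
    ultimately show ?thesis by simp
  qed
  have py: "((\<lambda>y'. f a y') has_derivative (\<lambda>h. gy (a, b) \<bullet> h)) (at b)" for a b
  proof -
    have l: "((\<lambda>y'. (a, y')) has_derivative (\<lambda>h. (0, h))) (at b)"
      by (auto intro!: derivative_eq_intros)
    have "((\<lambda>y'. f a y') has_derivative (\<lambda>h. blinfun_apply (Dg (a, b)) (0, h))) (at b)"
      using has_derivative_compose[OF l D1[of "(a, b)"]] by simp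
    moreover have "blinfun_apply (Dg (a, b)) (0, h) = gy (a, b) \<bullet> h" for h
      unfolding gy_def
      by (rule linear_repr[of "\<lambda>h. blinfun_apply (Dg (a, b)) (0, h)", simplified])
        (intro bounded_linear_blinfun_apply bounded_linear_Pair bounded_linear_ident bounded_linear_zero)
    ultimately show ?thesis by simp
  qed
  have py': "((\<lambda>y'. - f a y') has_derivative (\<lambda>h. (- gy (a, b)) \<bullet> h)) (at b)" for a b
    using has_derivative_minus[OF py[of a b]] by simp
  have SO: "saddle_op f = (\<lambda>p. (gx p, - gy p))"
  proof
    fix p :: "(real^'n) \<times> (real^'m)"
    obtain a b where p: "p = (a, b)" by (cases p)
    show "saddle_op f p = (gx p, - gy p)"
      unfolding p saddle_op_def using grad_eq[OF px[where a=a and b=b]] grad_eq[OF py[of a b]] by simp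
  qed
  have dv: "(\<lambda>p. blinfun_apply (Dg p) v) differentiable (at z)" for v z
    using bounded_bilinear.FDERIV[OF bounded_bilinear_blinfun_apply D2 has_derivative_const]
    unfolding differentiable_def by blast
  have Fd: "saddle_op f differentiable (at z)" for z
    unfolding SO gx_def gy_def
    by (intro differentiable_Pair differentiable_minus differentiable_sum differentiable_scaleR
        dv differentiable_const ballI finite_Basis)
  have lipF: "norm (saddle_op f a - saddle_op f b) \<le> L * norm (a - b)" for a b
    by (rule differentiable_bound[of UNIV _ "\<lambda>z. frechet_derivative (saddle_op f) (at z)"])
      (use Lbound in \<open>auto simp: Fd frechet_derivative_works[symmetric]\<close>)
  have lipx: "norm (gx (a, y) - gx (b, y)) \<le> L * norm (a - b)" for a b
  proof -
    have "norm (gx (a, y) - gx (b, y)) \<le> norm (saddle_op f (a, y) - saddle_op f (b, y))"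
      unfolding SO using norm_fst_le by simp
    also have "\<dots> \<le> L * norm ((a, y) - (b, y))" by (rule lipF)
    finally show ?thesis by (simp add: norm_Pair)
  qed
  have lipy: "norm (- gy (x, a) - - gy (x, b)) \<le> L * norm (a - b)" for a b
  proof -
    have "norm (- gy (x, a) - - gy (x, b)) \<le> norm (saddle_op f (x, a) - saddle_op f (x, b))"
      unfolding SO using norm_snd_le by simp
    also have "\<dots> \<le> L * norm ((x, a) - (x, b))" by (rule lipF)
    finally show ?thesis by (simp add: norm_Pair)
  qed
  obtain v :: "real^'n" where v: "v \<noteq> 0" using ex_nonzero by blast
  obtain w :: "real^'m" where w: "w \<noteq> 0" using ex_nonzero by blast
  note GX = gap_bounds[where \<mu>=\<mu> and g="\<lambda>x'. f x' y" and G="\<lambda>x'. gx (x', y)" and L=L and v=v, OF sconvex px lipx mu_pos v]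
  note GY = gap_bounds[where \<mu>=\<mu> and g="\<lambda>y'. - f x y'" and G="\<lambda>y'. - gy (x, y')" and L=L and v=w, OF sconcave py' lipy mu_pos w]
  have sup: "(SUP y'. f x y') = - (INF y'. - f x y')"
    by (simp add: Inf_real_def image_image)
  define A where "A = f x y - (INF x'. f x' y)"
  define B where "B = - f x y - (INF y'. - f x y')"
  define a where "a = (norm (gx (x, y)))\<^sup>2"
  define b where "b = (norm (- gy (x, y)))\<^sup>2"
  have gap: "(SUP y'. f x y') - (INF x'. f x' y) = A + B" unfolding A_def B_def sup by simp
  have nrm: "(norm (saddle_op f (x, y)))\<^sup>2 = a + b"
    unfolding SO a_def b_def by (simp add: norm_Pair)
  have muL: "\<mu> \<le> L" by (rule GX(1))
  have Lp: "L > 0" using muL mu_pos by simp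
  have ab: "a \<ge> 0" "b \<ge> 0" unfolding a_def b_def by simp_all
  have A1: "a / (2 * L) \<le> A" "A \<le> a / (2 * \<mu>)" using GX(3,4) unfolding A_def a_def by simp_all
  have B1: "b / (2 * L) \<le> B" "B \<le> b / (2 * \<mu>)" using GY(3,4) unfolding B_def b_def by simp_all
  have c1: "\<mu> / L\<^sup>2 \<le> 1 / L" using muL Lp by (simp add: field_simps power2_eq_square)
  have c2: "1 / \<mu> \<le> L / \<mu>\<^sup>2" using muL mu_pos by (simp add: field_simps power2_eq_square)
  have "\<mu> / L\<^sup>2 * ((1/2) * (a + b)) \<le> 1 / L * ((1/2) * (a + b))"
    by (rule mult_right_mono[OF c1]) (use ab in simp)
  also have "\<dots> = a / (2 * L) + b / (2 * L)" by (simp add: add_divide_distrib)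
  also have "\<dots> \<le> A + B" using A1 B1 by simp
  finally have lo: "\<mu> / L\<^sup>2 * ((1/2) * (a + b)) \<le> A + B" .
  have "A + B \<le> a / (2 * \<mu>) + b / (2 * \<mu>)" using A1 B1 by simp
  also have "\<dots> = 1 / \<mu> * ((1/2) * (a + b))" by (simp add: add_divide_distrib)
  also have "\<dots> \<le> L / \<mu>\<^sup>2 * ((1/2) * (a + b))"
    by (rule mult_right_mono[OF c2]) (use ab in simp)
  finally have hi: "A + B \<le> L / \<mu>\<^sup>2 * ((1/2) * (a + b))" .
  show ?thesis unfolding gap nrm using lo hi by simp
qed

end
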